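(* Let $X$ be a compact connected metric space with infinitely many points, let $\psi\colon X\to X$ be a minimal homeomorphism, and let $S$ be an infinite set of positive integers. Then for every $\varepsilon>0$ there exist $n\in S$, an $\varepsilon$-dense set $\{x_1,\dots,x_n\}\subset X$ of $n$ distinct points, and a permutation $s$ of $\{1,2,\dots,n\}$ such that $${\rm dist}(x_j,\psi(x_{s(j)}))<\varepsilon,\qquad j=1,2,\dots,n.$$
   Context: A homeomorphism is minimal if $X$ has no closed invariant subsets other than $\emptyset$ and $X$. *)

theory Defs
  imports "HOL-Analysis.Analysis"
begin

definition minimal_homeo :: "('a::topological_space \<Rightarrow> 'a) \<Rightarrow> bool" where
  "minimal_homeo psi \<longleftrightarrow>
     (\<forall>A::'a set. closed A \<and> psi ` A = A \<longrightarrow> A = {} \<or> A = UNIV)"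

end

theory Submission
  imports Defs
begin


lemma orbit_dense:
  fixes psi :: "'a::metric_space \<Rightarrow> 'a"
  assumes cpt: "compact (UNIV :: 'a set)"
    and hom: "homeomorphism UNIV UNIV psi phi"
    and mini: "minimal_homeo psi"
    and r: "r > 0"
  shows "\<exists>k\<ge>N. dist ((psi ^^ k) y) z < r"
proof -
  define B where "B N = {(psi ^^ k) y | k. N \<le> k}" for N
  define W where "W = (\<Inter>N. closure (B N))"
  have contpsi: "continuous_on UNIV psi" and contphi: "continuous_on UNIV phi"
    and inv1: "\<And>x. phi (psi x) = x" and inv2: "\<And>x. psi (phi x) = x"
    using hom by (auto simp: homeomorphism_def)
  have "closed W" unfolding W_def by auto
  have sub1: "psi ` W \<subseteq> W"
  proof
    fix w assume "w \<in> psi ` W"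
    then obtain l where l: "l \<in> W" "w = psi l" by auto
    show "w \<in> W" unfolding W_def
    proof
      fix N
      have "psi ` B N \<subseteq> B N"
      proof (clarsimp simp: B_def)
        fix k assume "N \<le> k"
        then show "\<exists>k'. psi ((psi ^^ k) y) = (psi ^^ k') y \<and> N \<le> k'"
          by (intro exI[of _ "Suc k"]) simp
      qed
      then have "psi ` B N \<subseteq> closure (B N)" using closure_subset by blast
      then have "psi ` closure (B N) \<subseteq> closure (B N)"
        using image_closure_subset[OF continuous_on_subset[OF contpsi] closed_closure] by blast
      moreover have "l \<in> closure (B N)" using l unfolding W_def by auto
      ultimately show "w \<in> closure (B N)" using l by auto
    qed
  qed
  have sub2: "W \<subseteq> psi ` W"
  proof
    fix l assume l: "l \<in> W"
    have "phi l \<in> W" unfolding W_def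
    proof
      fix N
      have "phi ` B (Suc N) \<subseteq> B N"
      proof (clarsimp simp: B_def)
        fix k assume "Suc N \<le> k"
        then obtain k' where k': "k = Suc k'" "N \<le> k'" by (cases k) auto
        then show "\<exists>k''. phi ((psi ^^ k) y) = (psi ^^ k'') y \<and> N \<le> k''"
          by (intro exI[of _ k']) (simp add: inv1)
      qed
      then have "phi ` B (Suc N) \<subseteq> closure (B N)" using closure_subset by blast
      then have "phi ` closure (B (Suc N)) \<subseteq> closure (B N)"
        using image_closure_subset[OF continuous_on_subset[OF contphi] closed_closure] by blast
      moreover have "l \<in> closure (B (Suc N))" using l unfolding W_def by auto
      ultimately show "phi l \<in> closure (B N)" by auto
    qed
    then show "l \<in> psi ` W" using inv2[of l] by (metis image_eqI)
  qed
  have "W \<noteq> {}"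
  proof -
    obtain l rr where lr: "strict_mono (rr :: nat \<Rightarrow> nat)" "((\<lambda>k. (psi ^^ k) y) \<circ> rr) \<longlonglongrightarrow> l"
      using seq_compactE[OF compact_imp_seq_compact[OF cpt], of "\<lambda>k. (psi ^^ k) y"] by blast
    have "l \<in> closure (B N)" for N
    proof -
      have "(\<lambda>n. ((\<lambda>k. (psi ^^ k) y) \<circ> rr) (n + N)) \<longlonglongrightarrow> l"
        using LIMSEQ_ignore_initial_segment[OF lr(2)] by simp
      moreover have "((\<lambda>k. (psi ^^ k) y) \<circ> rr) (n + N) \<in> B N" for n
      proof -
        have "n + N \<le> rr (n + N)" using seq_suble[OF lr(1)] by simp
        then show ?thesis unfolding B_def by auto
      qed
      ultimately show ?thesis unfolding closure_sequential by (intro exI[of _ "\<lambda>n. ((\<lambda>k. (psi ^^ k) y) \<circ> rr) (n + N)"]) blast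
    qed
    then show ?thesis unfolding W_def by auto
  qed
  then have "W = UNIV" using mini sub1 sub2 \<open>closed W\<close> unfolding minimal_homeo_def by blast
  then have "z \<in> closure (B N)" unfolding W_def by auto
  then obtain w where "w \<in> B N" "dist w z < r" using r unfolding closure_approachable by blast
  then show ?thesis unfolding B_def by auto
qed



definition ch :: "('a::metric_space \<Rightarrow> 'a) \<Rightarrow> real \<Rightarrow> 'a \<Rightarrow> 'a \<Rightarrow> nat \<Rightarrow> bool" where
  "ch psi d y z k \<longleftrightarrow> (\<exists>c. c 0 = y \<and> c k = z \<and> (\<forall>i<k. dist (c (Suc i)) (psi (c i)) < d))"

lemma ch_trans:
  assumes "ch psi d y z a" "ch psi d z w b" shows "ch psi d y w (a+b)"
proof -
  obtain c1 where c1: "c1 0 = y" "c1 a = z" "\<forall>i<a. dist (c1 (Suc i)) (psi (c1 i)) < d"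
    using assms(1) unfolding ch_def by blast
  obtain c2 where c2: "c2 0 = z" "c2 b = w" "\<forall>i<b. dist (c2 (Suc i)) (psi (c2 i)) < d"
    using assms(2) unfolding ch_def by blast
  define c where "c i = (if i \<le> a then c1 i else c2 (i - a))" for i
  have "\<forall>i<a+b. dist (c (Suc i)) (psi (c i)) < d"
  proof (intro allI impI)
    fix i assume i: "i < a + b"
    show "dist (c (Suc i)) (psi (c i)) < d"
    proof (cases "i < a")
      case True then show ?thesis using c1 by (simp add: c_def)
    next
      case False
      then have "i - a < b" "Suc i - a = Suc (i - a)" using i by auto
      moreover have "c i = c2 (i - a)" using False c1(2) c2(1) by (cases "i = a") (auto simp: c_def)
      ultimately show ?thesis using c2 False by (simp add: c_def)
    qed
  qed
  moreover have "c 0 = y" "c (a+b) = w" using c1 c2 by (auto simp: c_def)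
  ultimately show ?thesis unfolding ch_def by blast
qed

lemma ch_open:
  assumes "ch psi d y z k" "k \<ge> 1"
  shows "\<exists>r>0. \<forall>z'. dist z' z < r \<longrightarrow> ch psi d y z' k"
proof -
  obtain c where c: "c 0 = y" "c k = z" "\<forall>i<k. dist (c (Suc i)) (psi (c i)) < d"
    using assms(1) unfolding ch_def by blast
  obtain j where j: "k = Suc j" using assms(2) by (cases k) auto
  define r where "r = d - dist z (psi (c j))"
  have "r > 0" using c j by (auto simp: r_def)
  moreover have "ch psi d y z' k" if "dist z' z < r" for z'
  proof -
    define c' where "c' = c(k := z')"
    have "dist z' (psi (c j)) < d" using that dist_triangle[of z' "psi (c j)" z] r_def by linarith
    then show ?thesis unfolding ch_def using c j
      by (intro exI[of _ c']) (auto simp: c'_def less_Suc_eq)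
  qed
  ultimately show ?thesis by blast
qed

lemma ch_step:
  assumes "d > 0" shows "ch psi d z (psi z) 1"
  unfolding ch_def using assms by (intro exI[of _ "\<lambda>i. if i = 0 then z else psi z"]) auto

lemma ch_exists:
  assumes dense: "\<And>r. r > 0 \<Longrightarrow> \<exists>k\<ge>1. dist ((psi ^^ k) y) z < r" and "d > 0"
  shows "\<exists>k\<ge>1. ch psi d y z k"
proof -
  obtain k where k: "k \<ge> 1" "dist ((psi ^^ k) y) z < d" using dense[OF \<open>d>0\<close>] by blast
  define c where "c i = (if i < k then (psi ^^ i) y else z)" for i
  have "ch psi d y z k" unfolding ch_def
  proof (intro exI[of _ c] conjI allI impI)
    show "c 0 = y" using k by (simp add: c_def)
    show "c k = z" by (simp add: c_def)
    fix i assume "i < k"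
    show "dist (c (Suc i)) (psi (c i)) < d"
    proof (cases "Suc i < k")
      case True then show ?thesis using \<open>d>0\<close> by (simp add: c_def)
    next
      case False then have "Suc i = k" using \<open>i<k\<close> by simp
      then have "(psi ^^ k) y = psi ((psi^^i) y)" by (metis comp_apply funpow.simps(2))
      then show ?thesis using k \<open>i<k\<close> \<open>Suc i = k\<close> by (simp add: c_def dist_commute)
    qed
  qed
  then show ?thesis using k by blast
qed

lemma mult_closed:
  fixes M :: "nat set"
  assumes "0 \<in> M" "\<forall>a\<in>M. \<forall>b\<in>M. a + b \<in> M" "a \<in> M"
  shows "k * a \<in> M"
  using assms by (induction k) auto

lemma bezout_set:
  fixes M :: "nat set"
  assumes "finite F" "F \<subseteq> M" "0 \<in> M" "\<forall>a\<in>M. \<forall>b\<in>M. a + b \<in> M"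
  shows "\<exists>P\<in>M. \<exists>Q\<in>M. P = Q + Gcd F"
  using assms(1,2)
proof (induction F rule: finite_induct)
  case empty
  then show ?case using assms(3) by auto
next
  case (insert x F)
  then obtain P Q where PQ: "P \<in> M" "Q \<in> M" "P = Q + Gcd F" by auto
  have xM: "x \<in> M" using insert by auto
  show ?case
  proof (cases "x = 0")
    case True then show ?thesis using PQ by auto
  next
    case False
    then obtain u v where uv: "x * u = Gcd F * v + gcd x (Gcd F)" using bezout_nat by blast
    have "x * u + Q * v = P * v + gcd x (Gcd F)" using uv PQ(3) by (simp add: algebra_simps)
    moreover have "x * u + Q * v \<in> M" "P * v \<in> M"
    proof -
      have "u * x \<in> M" "v * Q \<in> M" "v * P \<in> M" using mult_closed[OF assms(3,4)] xM PQ by auto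
      then show "x * u + Q * v \<in> M" "P * v \<in> M" using assms(4) by (auto simp: mult.commute)
    qed
    ultimately show ?thesis by auto
  qed
qed

lemma consecutive_all:
  fixes M :: "nat set"
  assumes "0 \<in> M" "\<forall>a\<in>M. \<forall>b\<in>M. a + b \<in> M" "Q \<in> M" "Q + 1 \<in> M" "n \<ge> Q * Q"
  shows "n \<in> M"
proof (cases "Q = 0")
  case True
  then show ?thesis using mult_closed[OF assms(1,2) assms(4), of n] by simp
next
  case False
  define q where "q = n div Q"
  define r where "r = n mod Q"
  have "r < Q" using False by (simp add: r_def)
  have "Q \<le> q" using assms(5) False unfolding q_def
    by (metis div_le_mono nonzero_mult_div_cancel_right)
  have "n = (q - r) * Q + r * (Q + 1)"
  proof -
    have "n = q * Q + r" by (simp add: q_def r_def)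
    then show ?thesis using \<open>r < Q\<close> \<open>Q \<le> q\<close> by (simp add: algebra_simps diff_mult_distrib)
  qed
  moreover have "(q - r) * Q \<in> M" "r * (Q + 1) \<in> M"
    using mult_closed[OF assms(1,2) assms(3)] mult_closed[OF assms(1,2) assms(4)] by blast+
  ultimately show ?thesis using assms(2) by metis
qed



lemma mixing:
  fixes psi :: "'a::metric_space \<Rightarrow> 'a"
  assumes conn: "connected (UNIV::'a set)"
    and tr: "\<And>y z. \<exists>k\<ge>1. ch psi d y z k"
    and d: "d > 0"
  shows "\<exists>N. \<forall>n\<ge>N. ch psi d y x0 n"
proof -
  define G where "G = {k. k \<ge> 1 \<and> ch psi d x0 x0 k}"
  have Gadd: "a + b \<in> G" if "a \<in> G" "b \<in> G" for a b
  proof -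
    have "ch psi d x0 x0 a" "ch psi d x0 x0 b" "a \<ge> 1" using that unfolding G_def by auto
    then have "ch psi d x0 x0 (a + b)" "a + b \<ge> 1" using ch_trans by auto
    then show ?thesis unfolding G_def by simp
  qed
  obtain k0 where k0: "k0 \<in> G" using tr[of x0 x0] unfolding G_def by blast
  define P where "P g = (\<exists>F. finite F \<and> F \<subseteq> G \<and> F \<noteq> {} \<and> Gcd F = g)" for g
  have "P (Gcd {k0})" using k0 unfolding P_def by blast
  define g where "g = (LEAST g. P g)"
  have "P g" unfolding g_def by (rule LeastI) fact
  then obtain F where F: "finite F" "F \<subseteq> G" "F \<noteq> {}" "Gcd F = g" unfolding P_def by blast
  have gmin: "g \<le> g'" if "P g'" for g' using that unfolding g_def by (rule Least_le)
  have gpos: "g > 0"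
  proof -
    obtain f where "f \<in> F" using F by blast
    then have "f \<ge> 1" using F G_def by auto
    then show ?thesis using F \<open>f \<in> F\<close> by (metis Gcd_dvd_nat dual_order.strict_trans1 dvd_pos_nat zero_less_one)
  qed
  have gdvd: "g dvd k" if "k \<in> G" for k
  proof -
    have "P (Gcd (insert k F))" unfolding P_def using F that by blast
    then have "g \<le> Gcd (insert k F)" by (rule gmin)
    then have "g \<le> gcd k g" using F(4) by (simp add: Gcd_insert)
    moreover have "gcd k g \<le> g" using gpos by (simp add: gcd_le2_nat)
    ultimately have "gcd k g = g" by simp
    then show ?thesis by (metis gcd_dvd1)
  qed
  have wd: "k mod g = k' mod g" if "ch psi d x0 z k" "ch psi d x0 z k'" for z k k'
  proof -
    obtain m where m: "m \<ge> 1" "ch psi d z x0 m" using tr by blast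
    have "k + m \<in> G" "k' + m \<in> G" using ch_trans[OF that(1) m(2)] ch_trans[OF that(2) m(2)] m(1)
      unfolding G_def by auto
    then have "g dvd k + m" "g dvd k' + m" using gdvd by auto
    then show ?thesis by (smt (verit, ccfv_SIG) add.assoc add.commute add_0 dvd_imp_mod_0 mod_add_left_eq)
  qed
  have g1: "g = 1"
  proof (rule ccontr)
    assume "g \<noteq> 1"
    then have g2: "g > 1" using gpos by simp
    define V where "V = {z. \<exists>k\<ge>1. ch psi d x0 z k \<and> g dvd k}"
    have "open V"
      unfolding open_dist
    proof (intro ballI)
      fix z assume "z \<in> V"
      then obtain k where k: "k \<ge> 1" "ch psi d x0 z k" "g dvd k" unfolding V_def by blast
      then obtain r where "r > 0" "\<forall>z'. dist z' z < r \<longrightarrow> ch psi d x0 z' k" using ch_open by blast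
      then show "\<exists>e>0. \<forall>y. dist y z < e \<longrightarrow> y \<in> V" using k unfolding V_def by blast
    qed
    moreover have "open (- V)"
      unfolding open_dist
    proof (intro ballI)
      fix z assume "z \<in> - V"
      obtain k where k: "k \<ge> 1" "ch psi d x0 z k" using tr by blast
      then have nd: "\<not> g dvd k" using \<open>z \<in> - V\<close> unfolding V_def by blast
      obtain r where "r > 0" "\<forall>z'. dist z' z < r \<longrightarrow> ch psi d x0 z' k" using ch_open k by blast
      moreover have "y \<in> - V" if "ch psi d x0 y k" for y
      proof
        assume "y \<in> V"
        then obtain k' where "ch psi d x0 y k'" "g dvd k'" unfolding V_def by blast
        then show False using wd[OF that] nd by (simp add: dvd_eq_mod_eq_0)
      qed
      ultimately show "\<exists>e>0. \<forall>y. dist y z < e \<longrightarrow> y \<in> - V" by blast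
    qed
    moreover have "x0 \<in> V" using k0 gdvd[OF k0] unfolding V_def G_def by blast
    moreover have "psi x0 \<notin> V"
    proof
      assume "psi x0 \<in> V"
      then obtain k' where "ch psi d x0 (psi x0) k'" "g dvd k'" unfolding V_def by blast
      moreover have "ch psi d x0 (psi x0) (k0 + 1)" using ch_trans[OF _ ch_step[OF d]] k0 unfolding G_def by blast
      ultimately have "(k0 + 1) mod g = 0" using wd[of "psi x0" "k0+1" k'] by simp
      moreover have "k0 mod g = 0" using gdvd[OF k0] by simp
      ultimately show False using g2 by (metis One_nat_def add_Suc_right mod_Suc_eq mod_if nat.simps(3) nat_arith.rule0)
    qed
    ultimately have oV: "open V" "open (- V)" and inV: "x0 \<in> V" "psi x0 \<notin> V" by blast+
    have "V \<inter> UNIV = {} \<or> (- V) \<inter> UNIV = {}"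
      by (rule connectedD[OF conn oV]) auto
    then show False using inV by auto
  qed
  define M where "M = insert 0 G"
  have M0: "0 \<in> M" and Madd: "\<forall>a\<in>M. \<forall>b\<in>M. a + b \<in> M" using Gadd by (auto simp: M_def)
  have "F \<subseteq> M" using F(2) unfolding M_def by blast
  then obtain PP QQ where PQ: "PP \<in> M" "QQ \<in> M" "PP = QQ + 1"
    using bezout_set[OF F(1) _ M0 Madd] F(4) g1 by metis
  have allG: "n \<in> G" if "n \<ge> QQ * QQ + 1" for n
  proof -
    have "n \<in> M" using consecutive_all[OF M0 Madd PQ(2), of n] PQ that by simp
    then show ?thesis using that unfolding M_def by simp
  qed
  obtain m where m: "m \<ge> 1" "ch psi d y x0 m" using tr by blast
  have "ch psi d y x0 n" if "n \<ge> m + QQ * QQ + 1" for n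
  proof -
    have "n - m \<in> G" using allG that by auto
    then have "ch psi d y x0 (m + (n - m))" using ch_trans[OF m(2)] unfolding G_def by blast
    then show ?thesis using that by simp
  qed
  then show ?thesis by blast
qed



lemma inj_perturb:
  fixes c :: "nat \<Rightarrow> 'a::metric_space"
  assumes inf: "\<And>(a::'a) e. e > 0 \<Longrightarrow> infinite (ball a e)" and e: "e > 0"
  shows "\<exists>x. inj_on x {1..n} \<and> (\<forall>i\<in>{1..n}. dist (x i) (c i) < e)"
proof (induction n)
  case 0 then show ?case by auto
next
  case (Suc n)
  then obtain x where x: "inj_on x {1..n}" "\<forall>i\<in>{1..n}. dist (x i) (c i) < e" by blast
  have "infinite (ball (c (Suc n)) e - x ` {1..n})"
    using Diff_infinite_finite[OF finite_imageI[OF finite_atLeastAtMost[of 1 n], of x] inf[OF e, of "c (Suc n)"]] .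
  then obtain p where p: "p \<in> ball (c (Suc n)) e" "p \<notin> x ` {1..n}"
    using infinite_imp_nonempty by blast
  define x' where "x' = x(Suc n := p)"
  have eq: "{1..Suc n} = insert (Suc n) {1..n}" by auto
  have "inj_on x' {1..n}" using x(1) unfolding x'_def by (rule inj_on_cong[THEN iffD1, rotated]) auto
  moreover have "x' (Suc n) \<notin> x' ` {1..n}" using p unfolding x'_def by auto
  ultimately have "inj_on x' {1..Suc n}" unfolding eq by simp
  moreover have "\<forall>i\<in>{1..Suc n}. dist (x' i) (c i) < e"
    using x(2) p unfolding x'_def eq by (auto simp: dist_commute)
  ultimately show ?case by blast
qed

theorem lemma4p4:
  fixes psi :: "'a::metric_space \<Rightarrow> 'a" and S :: "nat set" and \<epsilon> :: real
  assumes "compact (UNIV :: 'a set)"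
    and "connected (UNIV :: 'a set)"
    and "infinite (UNIV :: 'a set)"
    and "\<exists>phi. homeomorphism UNIV UNIV psi phi"
    and "minimal_homeo psi"
    and "infinite S" and "\<forall>n\<in>S. n > 0"
    and "\<epsilon> > 0"
  shows "\<exists>n\<in>S. \<exists>x :: nat \<Rightarrow> 'a. inj_on x {1..n}
           \<and> (\<forall>y. \<exists>i\<in>{1..n}. dist y (x i) < \<epsilon>)
           \<and> (\<exists>s. s permutes {1..n} \<and> (\<forall>j\<in>{1..n}. dist (x j) (psi (x (s j))) < \<epsilon>))"
proof -
  note eps = \<open>\<epsilon> > 0\<close>
  obtain phi where hom: "homeomorphism UNIV UNIV psi phi" using assms(4) by blast
  have dense: "\<exists>k\<ge>N. dist ((psi ^^ k) y) z < r" if "r > 0" for N y z r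
    using orbit_dense[OF assms(1) hom assms(5) that] by blast
  have inf: "infinite (ball a e)" if "e > 0" for a :: 'a and e :: real
  proof -
    have "\<And>x. (UNIV::'a set) \<noteq> {x}" using assms(3) by (metis finite.emptyI finite_insert)
    then have "a islimpt UNIV" using connected_imp_perfect[OF assms(2)] by blast
    then show ?thesis using that unfolding islimpt_eq_infinite_ball by simp
  qed
  have "uniformly_continuous_on UNIV psi"
    using compact_uniformly_continuous[OF _ assms(1), of psi] hom unfolding homeomorphism_def by blast
  then have uc: "\<forall>e>0. \<exists>d>0. \<forall>x\<in>UNIV. \<forall>x'\<in>UNIV. dist x' x < d \<longrightarrow> dist (psi x') (psi x) < e"
    unfolding uniformly_continuous_on_def .
  have e4: "\<epsilon>/4 > 0" using eps by simp
  obtain \<eta>0 where \<eta>0: "\<eta>0 > 0" "\<forall>x\<in>UNIV. \<forall>x'\<in>UNIV. dist x' x < \<eta>0 \<longrightarrow> dist (psi x') (psi x) < \<epsilon>/4"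
    using uc e4 by blast
  define \<eta> where "\<eta> = min \<eta>0 (\<epsilon>/4)"
  have "\<eta> > 0" using \<eta>0 eps by (simp add: \<eta>_def)
  define \<delta> where "\<delta> = \<epsilon>/2"
  have "\<delta> > 0" using eps by (simp add: \<delta>_def)
  define x0 :: 'a where "x0 = undefined"
  have cover: "UNIV \<subseteq> (\<Union>i\<in>{1..}. ball ((psi ^^ i) x0) (\<epsilon>/2))"
  proof
    fix z :: 'a
    obtain k where "k \<ge> 1" "dist ((psi ^^ k) x0) z < \<epsilon>/2" using dense[of "\<epsilon>/2" 1 x0 z] eps by auto
    then show "z \<in> (\<Union>i\<in>{1..}. ball ((psi ^^ i) x0) (\<epsilon>/2))" by auto
  qed
  obtain C' where C': "C' \<subseteq> {1..}" "finite C'" "UNIV \<subseteq> (\<Union>i\<in>C'. ball ((psi ^^ i) x0) (\<epsilon>/2))"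
    using compactE_image[OF assms(1) _ cover] by blast
  define M where "M = Max (insert 1 C')"
  have M1: "M \<ge> 1" unfolding M_def using C'(2) by (intro Max_ge) auto
  have Mcov: "\<exists>i\<in>{1..M}. dist ((psi ^^ i) x0) z < \<epsilon>/2" for z
  proof -
    have "z \<in> (\<Union>i\<in>C'. ball ((psi ^^ i) x0) (\<epsilon>/2))" using C'(3) by (rule subsetD) simp
    then obtain i where "i \<in> C'" "dist ((psi ^^ i) x0) z < \<epsilon>/2" by auto
    moreover have "1 \<le> i" using \<open>i \<in> C'\<close> C'(1) by auto
    moreover have "i \<le> M" unfolding M_def using \<open>i \<in> C'\<close> C'(2) by (intro Max_ge) auto
    ultimately show ?thesis by auto
  qed
  have tr: "\<exists>k\<ge>1. ch psi \<delta> y z k" for y z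
    by (rule ch_exists[OF _ \<open>\<delta> > 0\<close>]) (use dense in blast)
  obtain N where N: "\<forall>n\<ge>N. ch psi \<delta> ((psi ^^ M) x0) x0 n"
    using mixing[OF assms(2) tr \<open>\<delta> > 0\<close>] by blast
  obtain n where n: "n \<in> S" "n \<ge> M + N + 1" using assms(6) unfolding infinite_nat_iff_unbounded_le by blast
  have "n - M \<ge> N" using n by simp
  then have "ch psi \<delta> ((psi ^^ M) x0) x0 (n - M)" using N by blast
  then obtain c2 where c2: "c2 0 = (psi ^^ M) x0" "c2 (n - M) = x0"
    "\<forall>i<n - M. dist (c2 (Suc i)) (psi (c2 i)) < \<delta>"
    unfolding ch_def by blast
  define c where "c i = (if i \<le> M then (psi ^^ i) x0 else c2 (i - M))" for i
  have c0: "c 0 = x0" and cn: "c n = x0" using c2 n by (auto simp: c_def)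
  have cch: "dist (c (Suc i)) (psi (c i)) < \<delta>" if "i < n" for i
  proof (cases "i < M")
    case True then show ?thesis using \<open>\<delta> > 0\<close> by (simp add: c_def)
  next
    case False
    then have "i - M < n - M" "Suc i - M = Suc (i - M)" using that by auto
    moreover have "c i = c2 (i - M)" using False c2(1) by (cases "i = M") (auto simp: c_def)
    ultimately show ?thesis using c2 False by (simp add: c_def)
  qed
  obtain x where x: "inj_on x {1..n}" "\<forall>i\<in>{1..n}. dist (x i) (c i) < \<eta>"
    using inj_perturb[OF inf \<open>\<eta> > 0\<close>] by blast
  have dens: "\<forall>y. \<exists>i\<in>{1..n}. dist y (x i) < \<epsilon>"
  proof
    fix y
    obtain i where i: "i \<in> {1..M}" "dist ((psi ^^ i) x0) y < \<epsilon>/2" using Mcov by blast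
    then have "i \<in> {1..n}" "c i = (psi ^^ i) x0" using n by (auto simp: c_def)
    moreover have "dist y (x i) \<le> dist y (c i) + dist (c i) (x i)" by (rule dist_triangle)
    moreover have "dist (x i) (c i) < \<eta>" using x(2) \<open>i \<in> {1..n}\<close> by blast
    then have "dist (c i) (x i) < \<epsilon>/4" by (simp add: \<eta>_def dist_commute)
    ultimately have "dist y (x i) < \<epsilon>" using i(2) eps by (simp add: dist_commute)
    then show "\<exists>i\<in>{1..n}. dist y (x i) < \<epsilon>" using \<open>i \<in> {1..n}\<close> by blast
  qed
  define s where "s j = (if j = 1 then n else if 2 \<le> j \<and> j \<le> n then j - 1 else j)" for j
  define t where "t j = (if j = n then 1 else j + 1)" for j
  have n1: "n \<ge> 1" using M1 n by auto
  have "bij_betw s {1..n} {1..n}"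
    by (rule bij_betw_byWitness[where f'=t]) (use n1 in \<open>auto simp: s_def t_def\<close>)
  then have perm: "s permutes {1..n}"
    by (rule bij_imp_permutes) (use n1 in \<open>auto simp: s_def\<close>)
  have edge: "dist (x j) (psi (x (s j))) < \<epsilon>" if j: "j \<in> {1..n}" for j
  proof -
    define p where "p = j - 1"
    have pj: "Suc p = j" "p < n" using j by (auto simp: p_def)
    have csp: "c (s j) = c p" using j cn c0 by (auto simp: s_def p_def)
    have sj: "s j \<in> {1..n}" using j by (auto simp: s_def)
    have "dist (x j) (c j) < \<eta>" using x(2) j by blast
    then have a1: "dist (x j) (c j) < \<epsilon>/4" by (simp add: \<eta>_def)
    have a2: "dist (c j) (psi (c p)) < \<epsilon>/2" using cch[OF pj(2)] pj(1) by (simp add: \<delta>_def)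
    have "dist (x (s j)) (c (s j)) < \<eta>" using x(2) sj by blast
    then have "dist (x (s j)) (c p) < \<eta>0" using csp by (simp add: \<eta>_def)
    then have "dist (psi (x (s j))) (psi (c p)) < \<epsilon>/4" using \<eta>0(2) by blast
    then have a3: "dist (psi (c p)) (psi (x (s j))) < \<epsilon>/4" by (simp add: dist_commute)
    have t1: "dist (x j) (psi (x (s j))) \<le> dist (x j) (c j) + dist (c j) (psi (x (s j)))"
      by (rule dist_triangle)
    have t2: "dist (c j) (psi (x (s j))) \<le> dist (c j) (psi (c p)) + dist (psi (c p)) (psi (x (s j)))"
      by (rule dist_triangle)
    show ?thesis using t1 t2 a1 a2 a3 by linarith
  qed
  show ?thesis using n(1) x(1) dens perm edge by blast
qed

end
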